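(* Let $k,r\geq 1$, let $1\le a\le b\le k$, let $1\le d\le r$, and let $I_d\subseteq\{1,\dots,r\}$ with $|I_d|=d$. Then for every $n\geq k$, $$\Bigl|S_n^{(r)}\Bigl(\bigcup_{m=a}^{b}T_{k,r}^m(I_d)\Bigr)\Bigr|=(k-1)!\,r^{k-1}\prod_{j=k}^n\bigl(d(k+a-b-1)+j(r-d)\bigr).$$
   Context: For $n,r\ge1$, $S_n^{(r)}$ denotes the set of coloured permutations of length $n$ with $r$ colours: sequences $\phi=(\phi_1,\dots,\phi_n)$ where $\phi_i=a_i^{(c_i)}$, $(a_1,\dots,a_n)$ is a permutation of $\{1,\dots,n\}$ and each $c_i\in\{1,\dots,r\}$ is the colour of $a_i$. For $\phi=(\tau_1^{(s_1)},\dots,\tau_k^{(s_k)})\in S_k^{(r)}$ and $\psi=(\alpha_1^{(v_1)},\dots,\alpha_n^{(v_n)})\in S_n^{(r)}$, an occurrence of $\phi$ in $\psi$ is a sequence of indices $1\le i_1<\dots<i_k\le n$ such that $(\alpha_{i_1},\dots,\alpha_{i_k})$ is order-isomorphic to $(\tau_1,\dots,\tau_k)$ and $v_{i_j}=s_j$ for all $j$. $\psi$ contains $\phi$ if there is at least one occurrence, and avoids $\phi$ otherwise. For a set $T$ of coloured patterns, $S_n^{(r)}(T)$ is the set of $\psi\in S_n^{(r)}$ avoiding every $\phi\in T$. For $I_d\subseteq\{1,\dots,r\}$ with $|I_d|=d$ and $1\le m\le k$, $T_{k,r}^m(I_d)$ is the set of all $\phi\in S_k^{(r)}$ whose first entry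 is $\phi_1=m^{(c)}$ for some colour $c\in I_d$. *)

theory Defs
  imports Main
begin

definition colperms :: "nat \<Rightarrow> nat \<Rightarrow> (nat \<times> nat) list set" where
  "colperms n r = {xs. length xs = n \<and> distinct (map fst xs) \<and> set (map fst xs) = {1..n}
                      \<and> (\<forall>x\<in>set xs. snd x \<in> {1..r})}"

definition contains :: "(nat \<times> nat) list \<Rightarrow> (nat \<times> nat) list \<Rightarrow> bool" where
  "contains phi psi = (\<exists>idx :: nat \<Rightarrow> nat.
      strict_mono_on {..<length phi} idx
    \<and> (\<forall>j<length phi. idx j < length psi)
    \<and> (\<forall>j<length phi. \<forall>l<length phi.
          (fst (psi ! idx j) < fst (psi ! idx l)) = (fst (phi ! j) < fst (phi ! l)))
    \<and> (\<forall>j<length phi. snd (psi ! idx j) = snd (phi ! j)))"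

definition avoiders :: "nat \<Rightarrow> nat \<Rightarrow> (nat \<times> nat) list set \<Rightarrow> (nat \<times> nat) list set" where
  "avoiders n r T = {psi \<in> colperms n r. \<forall>phi\<in>T. \<not> contains phi psi}"

definition Tset :: "nat \<Rightarrow> nat \<Rightarrow> nat \<Rightarrow> nat set \<Rightarrow> (nat \<times> nat) list set" where
  "Tset k r m I = {phi \<in> colperms k r. \<exists>c\<in>I. phi ! 0 = (m, c)}"

end

theory Submission imports Defs begin

lemma rank_bij:
  fixes V :: "nat set"
  assumes "finite V"
  shows "bij_betw (\<lambda>x. card {y\<in>V. y<x}) V {..<card V}"
proof -
  have mono: "card {y\<in>V. y<x} < card {y\<in>V. y<x'}" if "x \<in> V" "x' \<in> V" "x < x'" for x x'
    by (rule psubset_card_mono) (use assms that in auto)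
  have inj: "inj_on (\<lambda>x. card {y\<in>V. y<x}) V"
    by (metis (no_types, lifting) inj_onI linorder_neq_iff mono less_irrefl)
  have sub: "(\<lambda>x. card {y\<in>V. y<x}) ` V \<subseteq> {..<card V}"
  proof
    fix t assume "t \<in> (\<lambda>x. card {y\<in>V. y<x}) ` V"
    then obtain x where x: "x \<in> V" "t = card {y\<in>V. y<x}" by auto
    have "{y\<in>V. y<x} \<subset> V" using x by auto
    then show "t \<in> {..<card V}" using x assms psubset_card_mono by auto
  qed
  have "card ((\<lambda>x. card {y\<in>V. y<x}) ` V) = card {..<card V}"
    using card_image[OF inj] by simp
  then have "(\<lambda>x. card {y\<in>V. y<x}) ` V = {..<card V}"
    using card_subset_eq[OF _ sub] by auto
  then show ?thesis using inj bij_betw_def by blast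
qed

lemma rank_iso:
  fixes V :: "nat set"
  assumes "finite V" "x \<in> V" "x' \<in> V"
  shows "card {y\<in>V. y<x} < card {y\<in>V. y<x'} \<longleftrightarrow> x < x'"
proof
  assume "x < x'" then show "card {y\<in>V. y<x} < card {y\<in>V. y<x'}"
    by (intro psubset_card_mono) (use assms in auto)
next
  assume h: "card {y\<in>V. y<x} < card {y\<in>V. y<x'}"
  show "x < x'"
  proof (rule ccontr)
    assume "\<not> x < x'"
    then have "card {y\<in>V. y<x'} \<le> card {y\<in>V. y<x}"
      by (intro card_mono) (use assms in auto)
    with h show False by simp
  qed
qed

lemma R_iff:
  fixes t N a b k :: nat
  assumes "t < N" "1 \<le> a" "a \<le> b" "b \<le> k"
  shows "(\<exists>m\<in>{a..b}. m - 1 \<le> t \<and> k - m \<le> N - 1 - t) \<longleftrightarrow> (k \<le> N \<and> a \<le> t+1 \<and> t + 1 + k \<le> b + N)"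
proof
  assume "\<exists>m\<in>{a..b}. m - 1 \<le> t \<and> k - m \<le> N - 1 - t"
  then obtain m where "m \<in> {a..b}" "m - 1 \<le> t" "k - m \<le> N - 1 - t" by blast
  then show "k \<le> N \<and> a \<le> t+1 \<and> t + 1 + k \<le> b + N" using assms by auto
next
  assume h: "k \<le> N \<and> a \<le> t+1 \<and> t + 1 + k \<le> b + N"
  show "\<exists>m\<in>{a..b}. m - 1 \<le> t \<and> k - m \<le> N - 1 - t"
    by (rule bexI[of _ "max a (t+1+k-N)"]) (use assms h in auto)
qed

definition hb :: "nat \<Rightarrow> nat \<Rightarrow> nat \<Rightarrow> nat set \<Rightarrow> nat \<Rightarrow> nat \<Rightarrow> nat set \<Rightarrow> bool" where
  "hb k a b I x c Y = (c \<in> I \<and> (\<exists>m\<in>{a..b}. m - 1 \<le> card {y\<in>Y. y<x} \<and> k - m \<le> card {y\<in>Y. x<y}))"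

fun okl :: "nat \<Rightarrow> nat \<Rightarrow> nat \<Rightarrow> nat set \<Rightarrow> (nat \<times> nat) list \<Rightarrow> bool" where
  "okl k a b I [] = True"
| "okl k a b I (p # rest) = (okl k a b I rest \<and> \<not> hb k a b I (fst p) (snd p) (fst ` set rest))"

lemma okl_nth:
  "okl k a b I ps \<longleftrightarrow> (\<forall>i<length ps. \<not> hb k a b I (fst (ps!i)) (snd (ps!i)) (fst ` set (drop (Suc i) ps)))"
proof (induction ps)
  case Nil
  then show ?case by simp
next
  case (Cons p ps)
  show ?case
    unfolding okl.simps Cons.IH
    by (auto simp: less_Suc_eq_0_disj)
qed

lemma in_drop_fst:
  "y \<in> fst ` set (drop (Suc i) ps) \<longleftrightarrow> (\<exists>j. i < j \<and> j < length ps \<and> y = fst (ps ! j))"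
proof
  assume "y \<in> fst ` set (drop (Suc i) ps)"
  then obtain q where q: "q \<in> set (drop (Suc i) ps)" "y = fst q" by blast
  then obtain t where t: "t < length (drop (Suc i) ps)" "q = drop (Suc i) ps ! t"
    by (metis in_set_conv_nth)
  have "drop (Suc i) ps ! t = ps ! (Suc i + t)" using t(1) by simp
  then show "\<exists>j. i < j \<and> j < length ps \<and> y = fst (ps ! j)"
    using q t by (intro exI[of _ "Suc i + t"]) simp
next
  assume "\<exists>j. i < j \<and> j < length ps \<and> y = fst (ps ! j)"
  then obtain j where j: "i < j" "j < length ps" "y = fst (ps ! j)" by blast
  then have e: "ps ! j = drop (Suc i) ps ! (j - Suc i)" by simp
  have "j - Suc i < length (drop (Suc i) ps)" using j by simp
  then have "drop (Suc i) ps ! (j - Suc i) \<in> set (drop (Suc i) ps)" by (rule nth_mem)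
  then show "y \<in> fst ` set (drop (Suc i) ps)" using j(3) e by simp
qed

lemma card_filter_perm:
  assumes "distinct zs" "set zs = {1..k}" "length zs = k"
  shows "card {j\<in>{..<k}. P (zs ! j)} = card {v\<in>{1..k}. P v}"
proof -
  have bij: "bij_betw ((!) zs) {..<k} {1..k}"
    using bij_betw_nth[OF assms(1)] assms by auto
  have "inj_on ((!) zs) {j\<in>{..<k}. P (zs ! j)}"
    using bij bij_betw_imp_inj_on inj_on_subset by (metis (no_types, lifting) mem_Collect_eq subsetI)
  moreover have "((!) zs) ` {j\<in>{..<k}. P (zs ! j)} = {v\<in>{1..k}. P v}"
  proof
    show "((!) zs) ` {j\<in>{..<k}. P (zs ! j)} \<subseteq> {v\<in>{1..k}. P v}"
      using bij bij_betw_apply by fastforce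
  next
    show "{v\<in>{1..k}. P v} \<subseteq> ((!) zs) ` {j\<in>{..<k}. P (zs ! j)}"
    proof
      fix v assume v: "v \<in> {v\<in>{1..k}. P v}"
      then obtain j where "j < k" "zs ! j = v"
        using bij unfolding bij_betw_def by (metis (no_types, lifting) imageE lessThan_iff mem_Collect_eq)
      then show "v \<in> ((!) zs) ` {j\<in>{..<k}. P (zs ! j)}" using v by auto
    qed
  qed
  ultimately show ?thesis using card_image by metis
qed

lemma contains_hb:
  assumes T: "phi \<in> Tset k r m I" and m: "m \<in> {a..b}" and cont: "contains phi psi" and k: "k \<ge> 1"
    and bk: "b \<le> k"
  shows "\<exists>i<length psi. hb k a b I (fst (psi!i)) (snd (psi!i)) (fst ` set (drop (Suc i) psi))"
proof -
  from T obtain c where c: "c \<in> I" "phi ! 0 = (m, c)" and pc: "phi \<in> colperms k r"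
    unfolding Tset_def by blast
  have lenp: "length phi = k" and dp: "distinct (map fst phi)" and sp: "set (map fst phi) = {1..k}"
    using pc unfolding colperms_def by auto
  obtain idx where mono: "strict_mono_on {..<k} idx" and lt: "\<forall>j<k. idx j < length psi"
    and iso: "\<forall>j<k. \<forall>l<k. (fst (psi ! idx j) < fst (psi ! idx l)) = (fst (phi ! j) < fst (phi ! l))"
    and col: "\<forall>j<k. snd (psi ! idx j) = snd (phi ! j)"
    using cont lenp unfolding contains_def by auto
  define i where "i = idx 0"
  have i: "i < length psi" using lt k i_def by auto
  have ci: "snd (psi ! i) = c" using col k c i_def by auto
  define f where "f j = fst (psi ! idx j)" for j
  define Y where "Y = fst ` set (drop (Suc i) psi)"
  have finY: "finite Y" unfolding Y_def by auto
  have phieq: "fst (phi ! j) = fst (phi ! l) \<Longrightarrow> j < k \<Longrightarrow> l < k \<Longrightarrow> j = l" for j l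
    using dp lenp by (metis length_map nth_eq_iff_index_eq nth_map)
  have inj: "inj_on f {..<k}"
  proof (rule inj_onI)
    fix j l assume "j \<in> {..<k}" "l \<in> {..<k}" "f j = f l"
    then have jk: "j < k" "l < k" and fe: "fst (psi ! idx j) = fst (psi ! idx l)" unfolding f_def by auto
    have "\<not> fst (phi ! j) < fst (phi ! l)" using iso jk fe by (metis less_irrefl)
    moreover have "\<not> fst (phi ! l) < fst (phi ! j)" using iso jk fe by (metis less_irrefl)
    ultimately have "\<not> fst (phi ! j) < fst (phi ! l)" "\<not> fst (phi ! l) < fst (phi ! j)" "j < k" "l < k"
      using jk by auto
    then show "j = l" using phieq by (meson linorder_neqE_nat)
  qed
  have memb: "f j \<in> Y" if "j < k" "0 < j" for j
  proof -
    have "idx 0 < idx j" using mono that k unfolding strict_mono_on_def by auto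
    then show ?thesis unfolding Y_def f_def in_drop_fst i_def using lt that by blast
  qed
  have f0: "f 0 = fst (psi ! i)" unfolding f_def i_def by simp
  have fst0: "fst (phi ! 0) = m" using c by simp
  define JL where "JL = {j\<in>{..<k}. fst (phi ! j) < m}"
  define JG where "JG = {j\<in>{..<k}. m < fst (phi ! j)}"
  have mk: "m \<le> k" using m bk by auto
  have cJL: "card JL = m - 1"
  proof -
    have e: "{j\<in>{..<k}. ((map fst phi) ! j) < m} = JL"
      unfolding JL_def using lenp by auto
    have "card JL = card {v\<in>{1..k}. v < m}"
      using card_filter_perm[of "map fst phi" k "\<lambda>v. v < m"] dp sp lenp unfolding e by simp
    also have "{v\<in>{1..k}. v < m} = {1..<m}" using mk by auto
    finally show ?thesis by simp
  qed
  have cJG: "card JG = k - m"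
  proof -
    have e: "{j\<in>{..<k}. m < ((map fst phi) ! j)} = JG"
      unfolding JG_def using lenp by auto
    have "card JG = card {v\<in>{1..k}. m < v}"
      using card_filter_perm[of "map fst phi" k "\<lambda>v. m < v"] dp sp lenp unfolding e by simp
    also have "{v\<in>{1..k}. m < v} = {m<..k}" using m by auto
    finally show ?thesis by simp
  qed
  have L: "f ` JL \<subseteq> {y\<in>Y. y < fst (psi ! i)}"
  proof
    fix y assume "y \<in> f ` JL"
    then obtain j where j: "j < k" "fst (phi ! j) < m" "y = f j" unfolding JL_def by auto
    then have j0: "0 < j" using fst0 by (metis less_irrefl gr0I)
    have "f j < f 0" using iso[rule_format, of j 0] j k fst0 unfolding f_def by simp
    then show "y \<in> {y\<in>Y. y < fst (psi ! i)}" using j j0 memb[of j] f0 by auto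
  qed
  have G: "f ` JG \<subseteq> {y\<in>Y. fst (psi ! i) < y}"
  proof
    fix y assume "y \<in> f ` JG"
    then obtain j where j: "j < k" "m < fst (phi ! j)" "y = f j" unfolding JG_def by auto
    then have j0: "0 < j" using fst0 by (metis less_irrefl gr0I)
    have "f 0 < f j" using iso[rule_format, of 0 j] j k fst0 unfolding f_def by simp
    then show "y \<in> {y\<in>Y. fst (psi ! i) < y}" using j j0 memb[of j] f0 by auto
  qed
  have "card (f ` JL) = m - 1" using cJL inj card_image inj_on_subset unfolding JL_def
    by (metis (no_types, lifting) mem_Collect_eq subsetI)
  then have 1: "m - 1 \<le> card {y\<in>Y. y < fst (psi ! i)}"
    using L card_mono finY by (metis (no_types, lifting) finite_subset mem_Collect_eq subsetI)
  have "card (f ` JG) = k - m" using cJG inj card_image inj_on_subset unfolding JG_def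
    by (metis (no_types, lifting) mem_Collect_eq subsetI)
  then have 2: "k - m \<le> card {y\<in>Y. fst (psi ! i) < y}"
    using G card_mono finY by (metis (no_types, lifting) finite_subset mem_Collect_eq subsetI)
  show ?thesis using i 1 2 m c ci unfolding hb_def Y_def by blast
qed

lemma hb_contains:
  assumes dpsi: "distinct (map fst psi)" and cpsi: "\<forall>p\<in>set psi. snd p \<in> {1..r}"
    and i: "i < length psi"
    and h: "hb k a b I (fst (psi!i)) (snd (psi!i)) (fst ` set (drop (Suc i) psi))"
    and a1: "1 \<le> a" and bk: "b \<le> k"
  shows "\<exists>m\<in>{a..b}. \<exists>phi\<in>Tset k r m I. contains phi psi"
proof -
  define x where "x = fst (psi ! i)"
  define c where "c = snd (psi ! i)"
  define Y where "Y = fst ` set (drop (Suc i) psi)"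
  have finY: "finite Y" unfolding Y_def by auto
  obtain m where m: "m \<in> {a..b}" and cI: "c \<in> I"
    and mL: "m - 1 \<le> card {y\<in>Y. y<x}" and mG: "k - m \<le> card {y\<in>Y. x<y}"
    using h unfolding hb_def x_def c_def Y_def by blast
  have m1: "1 \<le> m" "m \<le> k" using m a1 bk by auto
  obtain A where A: "A \<subseteq> {y\<in>Y. y<x}" "card A = m - 1" "finite A"
    using obtain_subset_with_card_n[OF mL] by blast
  obtain B where B: "B \<subseteq> {y\<in>Y. x<y}" "card B = k - m" "finite B"
    using obtain_subset_with_card_n[OF mG] by blast
  define V where "V = insert x (A \<union> B)"
  have finV: "finite V" unfolding V_def using A B by auto
  have cardV: "card V = k"
  proof -
    have "x \<notin> A \<union> B" using A B by auto
    moreover have "A \<inter> B = {}" using A(1) B(1) by fastforce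
    ultimately have "card V = Suc (card A + card B)"
      unfolding V_def using A B by (simp add: card_Un_disjoint)
    then show ?thesis using A B m1 by simp
  qed
  have VY: "V \<subseteq> insert x Y" unfolding V_def using A B by auto
  define P where "P = {j. j < length psi \<and> fst (psi ! j) \<in> V}"
  have finP: "finite P" unfolding P_def by auto
  have injF: "inj_on (\<lambda>j. fst (psi ! j)) {..<length psi}"
    using dpsi unfolding inj_on_def by (metis length_map lessThan_iff nth_eq_iff_index_eq nth_map)
  have bijPV: "bij_betw (\<lambda>j. fst (psi ! j)) P V"
    unfolding bij_betw_def
  proof
    show "inj_on (\<lambda>j. fst (psi ! j)) P"
      using injF by (rule inj_on_subset) (auto simp: P_def)
  next
    show "(\<lambda>j. fst (psi ! j)) ` P = V"
    proof
      show "(\<lambda>j. fst (psi ! j)) ` P \<subseteq> V" unfolding P_def by auto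
    next
      show "V \<subseteq> (\<lambda>j. fst (psi ! j)) ` P"
      proof
        fix v assume v: "v \<in> V"
        show "v \<in> (\<lambda>j. fst (psi ! j)) ` P"
        proof (cases "v = x")
          case True
          then show ?thesis using i v unfolding P_def x_def by auto
        next
          case False
          then have "v \<in> Y" using v VY by auto
          then obtain j where "j < length psi" "v = fst (psi ! j)"
            unfolding Y_def in_drop_fst by blast
          then show ?thesis using v unfolding P_def by auto
        qed
      qed
    qed
  qed
  have cardP: "card P = k" using bij_betw_same_card[OF bijPV] cardV by simp
  have iP: "i \<in> P" unfolding P_def V_def x_def using i by auto
  have Pge: "i \<le> j" if "j \<in> P" for j
  proof (cases "fst (psi ! j) = x")
    case True
    then have "j = i" using injF that i unfolding P_def x_def inj_on_def by auto
    then show ?thesis by simp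
  next
    case False
    then have "fst (psi ! j) \<in> Y" using that VY unfolding P_def by auto
    then obtain j' where j': "i < j'" "j' < length psi" "fst (psi ! j) = fst (psi ! j')"
      unfolding Y_def in_drop_fst by blast
    have "j = j'" using injF j' that unfolding P_def inj_on_def by auto
    then show ?thesis using j' by simp
  qed
  define sl where "sl = sorted_list_of_set P"
  define idx where "idx j = sl ! j" for j
  have lsl: "length sl = k" unfolding sl_def using cardP by simp
  have ssl: "sorted_wrt (<) sl" unfolding sl_def by simp
  have setsl: "set sl = P" unfolding sl_def using finP by simp
  have dsl: "distinct sl" unfolding sl_def by simp
  have mono: "strict_mono_on {..<k} idx"
    unfolding strict_mono_on_def idx_def
  proof (intro allI impI)
    fix r s :: nat assume "r \<in> {..<k} \<and> s \<in> {..<k} \<and> r < s"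
    then show "sl ! r < sl ! s" using sorted_wrt_nth_less[OF ssl, of r s] lsl by simp
  qed
  have idxP: "idx j \<in> P" if "j < k" for j
    unfolding idx_def using that lsl setsl nth_mem by blast
  have bijIdx: "bij_betw idx {..<k} P"
    unfolding idx_def using bij_betw_nth[OF dsl] lsl setsl by auto
  have idx0: "idx 0 = i"
  proof -
    obtain j0 where j0: "j0 < k" "idx j0 = i"
      using iP setsl lsl unfolding idx_def by (metis in_set_conv_nth)
    have "idx 0 \<le> idx j0"
    proof (cases "j0 = 0")
      case False
      then have "idx 0 < idx j0" using mono j0 unfolding strict_mono_on_def by auto
      then show ?thesis by simp
    qed simp
    moreover have "i \<le> idx 0" using Pge idxP j0 by auto
    ultimately show ?thesis using j0 by simp
  qed
  define g where "g j = fst (psi ! idx j)" for j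
  have bijG: "bij_betw g {..<k} V"
    unfolding g_def using bij_betw_trans[OF bijIdx bijPV] by (simp add: comp_def)
  define rk where "rk v = card {u\<in>V. u < v}" for v
  have bijR: "bij_betw rk V {..<k}" unfolding rk_def using rank_bij[OF finV] cardV by simp
  have bijRG: "bij_betw (\<lambda>j. Suc (rk (g j))) {..<k} {1..k}"
  proof -
    have "bij_betw (rk \<circ> g) {..<k} {..<k}" using bij_betw_trans[OF bijG bijR] .
    moreover have "bij_betw Suc {..<k} {1..k}"
      by (simp add: bij_betw_def image_Suc_lessThan)
    ultimately have "bij_betw (Suc \<circ> (rk \<circ> g)) {..<k} {1..k}" by (rule bij_betw_trans)
    then show ?thesis by (simp add: comp_def)
  qed
  define phi where "phi = map (\<lambda>j. (Suc (rk (g j)), snd (psi ! idx j))) [0..<k]"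
  have lphi: "length phi = k" unfolding phi_def by simp
  have mfst: "map fst phi = map (\<lambda>j. Suc (rk (g j))) [0..<k]" unfolding phi_def by simp
  have "phi \<in> colperms k r"
    unfolding colperms_def
  proof (intro CollectI conjI)
    show "length phi = k" by (rule lphi)
    show "distinct (map fst phi)" unfolding mfst
      using bijRG by (simp add: distinct_map bij_betw_def atLeast0LessThan)
    show "set (map fst phi) = {1..k}" unfolding mfst
      using bijRG by (simp add: bij_betw_def atLeast0LessThan)
    show "\<forall>x\<in>set phi. snd x \<in> {1..r}"
    proof
      fix q assume "q \<in> set phi"
      then obtain j where j: "j < k" "q = (Suc (rk (g j)), snd (psi ! idx j))"
        unfolding phi_def by auto
      have "idx j < length psi" using idxP[OF j(1)] unfolding P_def by auto
      then have "psi ! idx j \<in> set psi" by simp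
      then show "snd q \<in> {1..r}" using cpsi j by auto
    qed
  qed
  moreover have "phi ! 0 = (m, c)"
  proof -
    have k0: "0 < k" using m1 by simp
    have "g 0 = x" unfolding g_def idx0 x_def ..
    moreover have "{u\<in>V. u < x} = A" unfolding V_def using A B by auto
    ultimately have "rk (g 0) = m - 1" unfolding rk_def using A by simp
    then show ?thesis unfolding phi_def using k0 m1 idx0 c_def by simp
  qed
  ultimately have T: "phi \<in> Tset k r m I" unfolding Tset_def using cI by auto
  have "contains phi psi"
    unfolding contains_def lphi
  proof (intro exI[of _ idx] conjI allI impI)
    show "strict_mono_on {..<k} idx" by (rule mono)
    fix j assume j: "j < k"
    show "idx j < length psi" using idxP[OF j] unfolding P_def by auto
    show "snd (psi ! idx j) = snd (phi ! j)" unfolding phi_def using j by simp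
    fix l assume l: "l < k"
    have gV: "g j \<in> V" "g l \<in> V" using bij_betw_apply[OF bijG] j l by simp_all
    show "(fst (psi ! idx j) < fst (psi ! idx l)) = (fst (phi ! j) < fst (phi ! l))"
      unfolding phi_def using j l rank_iso[OF finV gV] unfolding g_def rk_def by simp
  qed
  then show ?thesis using T m by blast
qed

definition W :: "nat \<Rightarrow> nat \<Rightarrow> nat \<Rightarrow> nat \<Rightarrow> nat set \<Rightarrow> nat set \<Rightarrow> (nat \<times> nat) list set" where
  "W r k a b I S = {ps. distinct (map fst ps) \<and> set (map fst ps) = S \<and> (\<forall>p\<in>set ps. snd p \<in> {1..r}) \<and> okl k a b I ps}"

definition hf :: "nat \<Rightarrow> nat \<Rightarrow> nat \<Rightarrow> nat \<Rightarrow> nat \<Rightarrow> nat \<Rightarrow> nat" where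
  "hf r k a b d s = (if s < k then s * r else d * (k + a - b - 1) + s * (r - d))"

lemma finite_W:
  assumes "finite S"
  shows "finite (W r k a b I S)"
proof (rule finite_subset)
  show "W r k a b I S \<subseteq> {xs. set xs \<subseteq> S \<times> {1..r} \<and> length xs = card S}"
  proof
    fix ps assume "ps \<in> W r k a b I S"
    then have d: "distinct (map fst ps)" "set (map fst ps) = S" "\<forall>p\<in>set ps. snd p \<in> {1..r}"
      unfolding W_def by auto
    have "length ps = card S" using distinct_card[OF d(1)] d(2) by simp
    moreover have "set ps \<subseteq> S \<times> {1..r}"
    proof
      fix p assume "p \<in> set ps"
      then have "fst p \<in> S" "snd p \<in> {1..r}" using d(2,3) by auto
      then show "p \<in> S \<times> {1..r}" by (simp add: mem_Times_iff)
    qed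
    ultimately show "ps \<in> {xs. set xs \<subseteq> S \<times> {1..r} \<and> length xs = card S}" by simp
  qed
  show "finite {xs. set xs \<subseteq> S \<times> {1..r} \<and> length xs = card S}"
    by (rule finite_lists_length_eq) (use assms in simp)
qed

lemma W_Cons:
  assumes "finite S" "S \<noteq> {}"
  shows "W r k a b I S = (\<Union>p\<in>{p\<in>S \<times> {1..r}. \<not> hb k a b I (fst p) (snd p) (S - {fst p})}.
            Cons p ` W r k a b I (S - {fst p}))"
proof
  show "W r k a b I S \<subseteq> (\<Union>p\<in>{p\<in>S \<times> {1..r}. \<not> hb k a b I (fst p) (snd p) (S - {fst p})}.
            Cons p ` W r k a b I (S - {fst p}))"
  proof
    fix ps assume ps: "ps \<in> W r k a b I S"
    have d: "distinct (map fst ps)" "set (map fst ps) = S" "\<forall>p\<in>set ps. snd p \<in> {1..r}"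
      "okl k a b I ps" using ps unfolding W_def by auto
    have "ps \<noteq> []" using d(2) assms(2) by auto
    then obtain p rest where pr: "ps = p # rest" by (cases ps) auto
    have n1: "fst p \<notin> fst ` set rest" using d(1) pr by simp
    have n2: "S = insert (fst p) (fst ` set rest)" using d(2) pr by simp
    have rs: "fst ` set rest = S - {fst p}" using n1 n2 by blast
    have ok: "okl k a b I rest" "\<not> hb k a b I (fst p) (snd p) (fst ` set rest)" using d(4) pr by simp_all
    have "rest \<in> W r k a b I (S - {fst p})"
      unfolding W_def using d(1,3) pr rs ok(1) by simp
    moreover have "p \<in> {p\<in>S \<times> {1..r}. \<not> hb k a b I (fst p) (snd p) (S - {fst p})}"
    proof -
      have "fst p \<in> S" "snd p \<in> {1..r}" using n2 d(3) pr by auto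
      then show ?thesis using ok(2) rs by (simp add: mem_Times_iff)
    qed
    ultimately show "ps \<in> (\<Union>p\<in>{p\<in>S \<times> {1..r}. \<not> hb k a b I (fst p) (snd p) (S - {fst p})}.
            Cons p ` W r k a b I (S - {fst p}))" using pr by blast
  qed
next
  show "(\<Union>p\<in>{p\<in>S \<times> {1..r}. \<not> hb k a b I (fst p) (snd p) (S - {fst p})}.
            Cons p ` W r k a b I (S - {fst p})) \<subseteq> W r k a b I S"
  proof
    fix ps assume "ps \<in> (\<Union>p\<in>{p\<in>S \<times> {1..r}. \<not> hb k a b I (fst p) (snd p) (S - {fst p})}.
            Cons p ` W r k a b I (S - {fst p}))"
    then obtain p rest where p: "p \<in> S \<times> {1..r}" "\<not> hb k a b I (fst p) (snd p) (S - {fst p})"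
      and rest: "rest \<in> W r k a b I (S - {fst p})" and pr: "ps = p # rest" by blast
    have d: "distinct (map fst rest)" "set (map fst rest) = S - {fst p}" "\<forall>p\<in>set rest. snd p \<in> {1..r}"
      "okl k a b I rest" using rest unfolding W_def by auto
    have e: "fst ` set rest = S - {fst p}" using d(2) by simp
    have "fst p \<in> S" "snd p \<in> {1..r}" using p(1) by (auto simp: mem_Times_iff)
    moreover have "distinct (map fst ps)" using d(1) e pr by simp
    moreover have "set (map fst ps) = S" using e pr \<open>fst p \<in> S\<close> by auto
    moreover have "\<forall>q\<in>set ps. snd q \<in> {1..r}" using d(3) pr \<open>snd p \<in> {1..r}\<close> by auto
    moreover have "okl k a b I ps" using pr d(4) p(2) e by simp
    ultimately show "ps \<in> W r k a b I S" unfolding W_def by blast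
  qed
qed

lemma card_filter_bij:
  assumes "bij_betw f A B"
  shows "card {x\<in>A. P (f x)} = card {y\<in>B. P y}"
proof -
  have "inj_on f {x\<in>A. P (f x)}"
    using bij_betw_imp_inj_on[OF assms] by (rule inj_on_subset) auto
  moreover have "f ` {x\<in>A. P (f x)} = {y\<in>B. P y}"
  proof
    show "f ` {x\<in>A. P (f x)} \<subseteq> {y\<in>B. P y}" using bij_betw_apply[OF assms] by auto
  next
    show "{y\<in>B. P y} \<subseteq> f ` {x\<in>A. P (f x)}"
    proof
      fix y assume y: "y \<in> {y\<in>B. P y}"
      then obtain x where "x \<in> A" "f x = y"
        using assms unfolding bij_betw_def by (metis (no_types, lifting) imageE mem_Collect_eq)
      then show "y \<in> f ` {x\<in>A. P (f x)}" using y by auto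
    qed
  qed
  ultimately show ?thesis using card_image by metis
qed

lemma card_Good:
  assumes a1: "1 \<le> a" and ab: "a \<le> b" and bk: "b \<le> k" and I: "I \<subseteq> {1..r}" and cI: "card I = d"
    and finS: "finite S" and N: "card S = N" and N1: "1 \<le> N"
  shows "card {p\<in>S \<times> {1..r}. \<not> hb k a b I (fst p) (snd p) (S - {fst p})} = hf r k a b d N"
proof -
  define rk where "rk x = card {y\<in>S. y<x}" for x
  have bij: "bij_betw rk S {..<N}" unfolding rk_def using rank_bij[OF finS] N by simp
  define Q where "Q x = (\<exists>m\<in>{a..b}. m - 1 \<le> card {y\<in>S - {x}. y<x} \<and> k - m \<le> card {y\<in>S - {x}. x<y})" for x
  define R where "R t = (k \<le> N \<and> a \<le> t + 1 \<and> t + 1 + k \<le> b + N)" for t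
  have QR: "Q x = R (rk x)" if x: "x \<in> S" for x
  proof -
    have e1: "{y\<in>S - {x}. y<x} = {y\<in>S. y<x}" by auto
    have "S = {y\<in>S. y<x} \<union> ({x} \<union> {y\<in>S - {x}. x<y})" using x by auto
    moreover have "card ({y\<in>S. y<x} \<union> ({x} \<union> {y\<in>S - {x}. x<y})) = rk x + (1 + card {y\<in>S - {x}. x<y})"
      unfolding rk_def using finS by (subst card_Un_disjoint; auto)+
    ultimately have e2: "card {y\<in>S - {x}. x<y} = N - 1 - rk x" using N by simp
    have "rk x < N" using bij x bij_betw_apply by fastforce
    then show ?thesis unfolding Q_def R_def e1 e2 using R_iff[OF _ a1 ab bk] unfolding rk_def by blast
  qed
  have G: "{p\<in>S \<times> {1..r}. \<not> hb k a b I (fst p) (snd p) (S - {fst p})} = S \<times> {1..r} - {x\<in>S. Q x} \<times> I"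
    unfolding hb_def Q_def by auto
  have sub: "{x\<in>S. Q x} \<times> I \<subseteq> S \<times> {1..r}" using I by auto
  have finI: "finite I" using I finite_subset by blast
  have cG: "card (S \<times> {1..r} - {x\<in>S. Q x} \<times> I) = N * r - card {x\<in>S. Q x} * d"
    using card_Diff_subset[OF _ sub] finS finI N cI by (simp add: card_cartesian_product)
  have "{x\<in>S. Q x} = {x\<in>S. R (rk x)}" using QR by auto
  then have cQ: "card {x\<in>S. Q x} = card {t\<in>{..<N}. R t}" using card_filter_bij[OF bij] by simp
  show ?thesis
  proof (cases "k \<le> N")
    case False
    then have "{t\<in>{..<N}. R t} = {}" unfolding R_def by auto
    then have "card {t\<in>{..<N}. R t} = 0" by (simp only: card.empty)
    then have c0: "card {x\<in>S. Q x} = 0" by (simp only: cQ)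
    have "hf r k a b d N = N * r" unfolding hf_def using False by simp
    then show ?thesis by (simp only: G cG c0 mult_0 diff_zero)
  next
    case True
    have "{t\<in>{..<N}. R t} = {a - 1..<b + N - k}" unfolding R_def using True a1 ab bk by auto
    then have c: "card {t\<in>{..<N}. R t} = b + N - k - (a - 1)" by simp
    define u where "u = b + N - k - (a - 1)"
    define v where "v = k + a - b - 1"
    have uv: "u + v = N" unfolding u_def v_def using True a1 ab bk by simp
    have dr: "d \<le> r" using card_mono[OF _ I] cI by simp
    have "N * r = N * d + N * (r - d)" using dr by (simp add: diff_mult_distrib2)
    also have "N * d = u * d + v * d" using uv by (metis add_mult_distrib)
    finally have "N * r - u * d = d * v + N * (r - d)" by simp
    then show ?thesis using G cG cQ c True unfolding hf_def u_def v_def by simp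
  qed
qed

lemma card_W:
  assumes a1: "1 \<le> a" and ab: "a \<le> b" and bk: "b \<le> k" and I: "I \<subseteq> {1..r}" and cI: "card I = d"
  shows "finite S \<Longrightarrow> card (W r k a b I S) = (\<Prod>s=1..card S. hf r k a b d s)"
proof (induction "card S" arbitrary: S)
  case 0
  then have "S = {}" by simp
  then have "W r k a b I S = {[]}" unfolding W_def by auto
  then show ?case using 0 by simp
next
  case (Suc N)
  have ne: "S \<noteq> {}" using Suc by auto
  define Good where "Good = {p\<in>S \<times> {1..r}. \<not> hb k a b I (fst p) (snd p) (S - {fst p})}"
  have finG: "finite Good" unfolding Good_def using Suc by auto
  have "card (W r k a b I S) = card (\<Union>p\<in>Good. Cons p ` W r k a b I (S - {fst p}))"
    using W_Cons[OF Suc(3) ne] unfolding Good_def by simp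
  also have "\<dots> = (\<Sum>p\<in>Good. card (Cons p ` W r k a b I (S - {fst p})))"
    by (rule card_UN_disjoint) (use finG Suc(3) finite_W in auto)
  also have "\<dots> = (\<Sum>p\<in>Good. \<Prod>s=1..N. hf r k a b d s)"
  proof (rule sum.cong)
    fix p assume p: "p \<in> Good"
    then have "fst p \<in> S" unfolding Good_def by auto
    then have cS: "card (S - {fst p}) = N" using Suc by simp
    have "card (Cons p ` W r k a b I (S - {fst p})) = card (W r k a b I (S - {fst p}))"
      by (rule card_image) simp
    also have "\<dots> = (\<Prod>s=1..N. hf r k a b d s)" using Suc(1)[of "S - {fst p}"] cS Suc(3) by simp
    finally show "card (Cons p ` W r k a b I (S - {fst p})) = (\<Prod>s=1..N. hf r k a b d s)" .
  qed simp
  also have "\<dots> = card Good * (\<Prod>s=1..N. hf r k a b d s)" by simp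
  also have "card Good = hf r k a b d (Suc N)"
    unfolding Good_def using card_Good[OF a1 ab bk I cI Suc(3)] Suc(2) by simp
  finally show ?case using Suc(2)[symmetric] by simp
qed

lemma prod_hf:
  assumes "1 \<le> k" "k \<le> n"
  shows "(\<Prod>s=1..n. hf r k a b d s) = fact (k - 1) * r ^ (k - 1) * (\<Prod>j=k..n. d * (k + a - b - 1) + j * (r - d))"
proof -
  have split: "{1..n} = {1..k-1} \<union> {k..n}" using assms by auto
  have disj: "{1..k-1} \<inter> {k..n} = {}" by auto
  have "(\<Prod>s=1..n. hf r k a b d s) = (\<Prod>s=1..k-1. hf r k a b d s) * (\<Prod>s=k..n. hf r k a b d s)"
    unfolding split by (rule prod.union_disjoint) (use disj in auto)
  also have "(\<Prod>s=1..k-1. hf r k a b d s) = (\<Prod>s=1..k-1. s * r)"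
    by (rule prod.cong) (auto simp: hf_def)
  also have "\<dots> = (\<Prod>s=1..k-1. s) * r ^ (k - 1)"
    by (simp add: prod.distrib)
  also have "(\<Prod>s=1..k-1. s) = fact (k - 1)"
    by (simp add: fact_prod)
  also have "(\<Prod>s=k..n. hf r k a b d s) = (\<Prod>j=k..n. d * (k + a - b - 1) + j * (r - d))"
    by (rule prod.cong) (auto simp: hf_def)
  finally show ?thesis .
qed

theorem mainTheorem2:
  fixes k r a b d n :: nat and I :: "nat set"
  assumes "k \<ge> 1" "r \<ge> 1" "1 \<le> a" "a \<le> b" "b \<le> k" "1 \<le> d" "d \<le> r"
    and "I \<subseteq> {1..r}" "card I = d" "n \<ge> k"
  shows "card (avoiders n r (\<Union>m\<in>{a..b}. Tset k r m I))
         = fact (k - 1) * r ^ (k - 1) * (\<Prod>j=k..n. d * (k + a - b - 1) + j * (r - d))"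
proof -
  have eq: "avoiders n r (\<Union>m\<in>{a..b}. Tset k r m I) = W r k a b I {1..n}"
  proof (rule set_eqI)
    fix psi
    show "psi \<in> avoiders n r (\<Union>m\<in>{a..b}. Tset k r m I) \<longleftrightarrow> psi \<in> W r k a b I {1..n}"
    proof (cases "distinct (map fst psi) \<and> set (map fst psi) = {1..n} \<and> (\<forall>p\<in>set psi. snd p \<in> {1..r})")
      case False
      then show ?thesis unfolding avoiders_def colperms_def W_def by auto
    next
      case True
      then have dp: "distinct (map fst psi)" and sp: "set (map fst psi) = {1..n}"
        and cp: "\<forall>p\<in>set psi. snd p \<in> {1..r}" by auto
      have len: "length psi = n" using distinct_card[OF dp] sp by simp
      have e1: "psi \<in> avoiders n r (\<Union>m\<in>{a..b}. Tset k r m I) \<longleftrightarrow>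
          (\<forall>phi\<in>(\<Union>m\<in>{a..b}. Tset k r m I). \<not> contains phi psi)"
        using dp sp cp len unfolding avoiders_def colperms_def by auto
      have e2: "psi \<in> W r k a b I {1..n} \<longleftrightarrow> okl k a b I psi"
        using dp sp cp unfolding W_def by auto
      have e3: "(\<forall>phi\<in>(\<Union>m\<in>{a..b}. Tset k r m I). \<not> contains phi psi) \<longleftrightarrow> okl k a b I psi"
      proof
        assume A: "\<forall>phi\<in>(\<Union>m\<in>{a..b}. Tset k r m I). \<not> contains phi psi"
        show "okl k a b I psi"
          unfolding okl_nth
        proof (intro allI impI notI)
          fix i assume i: "i < length psi"
            and h: "hb k a b I (fst (psi ! i)) (snd (psi ! i)) (fst ` set (drop (Suc i) psi))"
          obtain m phi where "m \<in> {a..b}" "phi \<in> Tset k r m I" "contains phi psi"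
            using hb_contains[OF dp cp i h assms(3) assms(5)] by blast
          then show False using A by blast
        qed
      next
        assume B: "okl k a b I psi"
        show "\<forall>phi\<in>(\<Union>m\<in>{a..b}. Tset k r m I). \<not> contains phi psi"
        proof (intro ballI notI)
          fix phi assume "phi \<in> (\<Union>m\<in>{a..b}. Tset k r m I)" and c: "contains phi psi"
          then obtain m where m: "m \<in> {a..b}" "phi \<in> Tset k r m I" by blast
          obtain i where "i < length psi" "hb k a b I (fst (psi!i)) (snd (psi!i)) (fst ` set (drop (Suc i) psi))"
            using contains_hb[OF m(2) m(1) c assms(1) assms(5)] by blast
          then show False using B unfolding okl_nth by blast
        qed
      qed
      show ?thesis using e1 e2 e3 by simp
    qed
  qed
  have "card (W r k a b I {1..n}) = (\<Prod>s=1..n. hf r k a b d s)"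
    using card_W[OF assms(3,4,5,8,9), of "{1..n}"] by simp
  then show ?thesis using eq prod_hf[OF assms(1) assms(10)] by simp
qed

end
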